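(* Let $Z=\{P_1,\dots,P_r\}\subset\mathbb{P}^2$ be a finite set of points, let $m>n$ be positive integers and $\alpha=\alpha(I(mZ))-\alpha(I(nZ))$. Let $C$ be an effective divisor of degree $\alpha(I(mZ))$ with $\operatorname{ord}_{P_i}C\ge m$ for all $i$, and let $C=\sum_j a_jC_j$ be its decomposition into distinct irreducible components with multiplicities $a_j\ge1$. Put $\gamma_j=\deg(C_j)$, $m_i^{(j)}=\operatorname{ord}_{P_i}C_j$, $\mathbf{m}^{(j)}=(m_1^{(j)},\dots,m_r^{(j)})$, $n_i^{(j)}=\max\{m_i^{(j)}-(m-n),0\}$, $\mathbf{n}^{(j)}=(n_1^{(j)},\dots,n_r^{(j)})$. Then for each $j$: (i) $\gamma_j=\alpha(I(\mathbf{m}^{(j)}Z))$; (ii) $\alpha(I(\mathbf{m}^{(j)}Z))-\alpha(I(\mathbf{n}^{(j)}Z))\le\alpha$.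
   Context: Work over an algebraically closed field $\mathbb{K}$ of characteristic zero, $R=\mathbb{K}[x_0,x_1,x_2]$. For a point $P\in\mathbb{P}^2$, $I(P)\subset R$ is its homogeneous maximal ideal. For $Z=\{P_1,\dots,P_r\}$ and non-negative integers $\mathbf{m}=(m_1,\dots,m_r)$, $I(\mathbf{m}Z)=I(P_1)^{m_1}\cap\dots\cap I(P_r)^{m_r}$ (with $I(P)^0=R$); $I(mZ)$ is this with all $m_i=m$. For a homogeneous ideal $J$, $\alpha(J)=\min\{n: J_n\neq0\}$ is its initial degree (so $\alpha(R)=0$). $\operatorname{ord}_P$ denotes multiplicity of a divisor at $P$. *)

theory Defs
  imports "HOL-Library.Poly_Mapping" "HOL-Library.Numeral_Type"
          "HOL-Computational_Algebra.Polynomial" "HOL-Computational_Algebra.Factorial_Ring"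
begin

text \<open>Polynomials in three variables x0, x1, x2 (indexed by the 3-element type 3)
  with coefficients in 'a: the ring R = K[x0,x1,x2].\<close>
type_synonym 'a mpoly3 = "(3 \<Rightarrow>\<^sub>0 nat) \<Rightarrow>\<^sub>0 'a"

definition mpeval :: "'a::comm_semiring_1 mpoly3 \<Rightarrow> (3 \<Rightarrow> 'a) \<Rightarrow> 'a" where
  "mpeval F x = (\<Sum>mu\<in>Poly_Mapping.keys F. Poly_Mapping.lookup F mu * (\<Prod>i\<in>UNIV. x i ^ Poly_Mapping.lookup mu i))"

definition mdeg :: "(3 \<Rightarrow>\<^sub>0 nat) \<Rightarrow> nat" where
  "mdeg mu = (\<Sum>i\<in>UNIV. Poly_Mapping.lookup mu i)"

definition homog :: "nat \<Rightarrow> 'a::zero mpoly3 \<Rightarrow> bool" where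
  "homog d F \<longleftrightarrow> (\<forall>mu\<in>Poly_Mapping.keys F. mdeg mu = d)"

definition tdeg :: "'a::zero mpoly3 \<Rightarrow> nat" where
  "tdeg F = Max (mdeg ` Poly_Mapping.keys F)"

text \<open>I(P): homogeneous ideal of the projective point with homogeneous coordinates P
  (P nonzero): polynomials vanishing on the whole line through P, i.e. all of whose
  homogeneous components vanish at P.\<close>
definition pt_ideal :: "(3 \<Rightarrow> 'a::comm_ring_1) \<Rightarrow> 'a mpoly3 set" where
  "pt_ideal P = {F. \<forall>t. mpeval F (\<lambda>i. t * P i) = 0}"

fun ideal_pow :: "'b::comm_ring_1 set \<Rightarrow> nat \<Rightarrow> 'b set" where
  "ideal_pow I 0 = UNIV"
| "ideal_pow I (Suc k) =
     {\<Sum>j<N. f j * g j | (N::nat) f g. \<forall>j<N. f j \<in> ideal_pow I k \<and> g j \<in> I}"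

text \<open>I(mZ) = I(P_1)^{m_1} \<inter> ... \<inter> I(P_r)^{m_r} for Z = {P_0..P_(r-1)}\<close>
definition fat_ideal :: "nat \<Rightarrow> (nat \<Rightarrow> 3 \<Rightarrow> 'a::comm_ring_1) \<Rightarrow> (nat \<Rightarrow> nat) \<Rightarrow> 'a mpoly3 set" where
  "fat_ideal r P mults = (\<Inter>i\<in>{..<r}. ideal_pow (pt_ideal (P i)) (mults i))"

definition alpha :: "'a::zero mpoly3 set \<Rightarrow> nat" where
  "alpha J = (LEAST d. \<exists>F\<in>J. F \<noteq> 0 \<and> homog d F)"

definition ord_pt :: "(3 \<Rightarrow> 'a::comm_ring_1) \<Rightarrow> 'a mpoly3 \<Rightarrow> nat" where
  "ord_pt P F = (GREATEST k. F \<in> ideal_pow (pt_ideal P) k)"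

end

theory Submission
  imports Defs
begin



definition mon :: "(3 \<Rightarrow> 'b::comm_ring_1) \<Rightarrow> (3 \<Rightarrow>\<^sub>0 nat) \<Rightarrow> 'b" where
  "mon \<phi> \<mu> = (\<Prod>i\<in>UNIV. \<phi> i ^ Poly_Mapping.lookup \<mu> i)"

definition ev :: "('a::comm_ring_1 \<Rightarrow> 'b::comm_ring_1) \<Rightarrow> (3 \<Rightarrow> 'b) \<Rightarrow> 'a mpoly3 \<Rightarrow> 'b" where
  "ev h \<phi> F = (\<Sum>\<mu>\<in>Poly_Mapping.keys F. h (Poly_Mapping.lookup F \<mu>) * mon \<phi> \<mu>)"

definition rhom :: "('a::comm_ring_1 \<Rightarrow> 'b::comm_ring_1) \<Rightarrow> bool" where
  "rhom h \<longleftrightarrow> h 0 = 0 \<and> h 1 = 1 \<and> (\<forall>x y. h (x+y) = h x + h y) \<and> (\<forall>x y. h (x*y) = h x * h y)"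

lemma mon_add: "mon \<phi> (\<mu> + \<nu>) = mon \<phi> \<mu> * mon \<phi> \<nu>"
  by (simp add: mon_def lookup_add power_add prod.distrib)

lemma mon_zero [simp]: "mon \<phi> 0 = 1"
  by (simp add: mon_def)

lemma ev_superset:
  assumes "h 0 = 0" "finite K" "Poly_Mapping.keys F \<subseteq> K"
  shows "ev h \<phi> F = (\<Sum>\<mu>\<in>K. h (Poly_Mapping.lookup F \<mu>) * mon \<phi> \<mu>)"
  unfolding ev_def
  by (rule sum.mono_neutral_left) (use assms in \<open>auto simp: in_keys_iff\<close>)

lemma ev_zero [simp]: "ev h \<phi> 0 = 0"
  by (simp add: ev_def)

lemma ev_add:
  assumes "rhom h" shows "ev h \<phi> (A + B) = ev h \<phi> A + ev h \<phi> B"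
proof -
  have h0: "h 0 = 0" and ha: "\<And>x y. h (x+y) = h x + h y" using assms by (auto simp: rhom_def)
  let ?K = "Poly_Mapping.keys A \<union> Poly_Mapping.keys B"
  have "ev h \<phi> (A+B) = (\<Sum>\<mu>\<in>?K. h (Poly_Mapping.lookup (A+B) \<mu>) * mon \<phi> \<mu>)"
    by (rule ev_superset) (use h0 keys_add[of A B] in auto)
  also have "\<dots> = (\<Sum>\<mu>\<in>?K. h (Poly_Mapping.lookup A \<mu>) * mon \<phi> \<mu>) + (\<Sum>\<mu>\<in>?K. h (Poly_Mapping.lookup B \<mu>) * mon \<phi> \<mu>)"
    by (simp add: lookup_add ha distrib_right sum.distrib)
  also have "\<dots> = ev h \<phi> A + ev h \<phi> B"
    by (subst (1 2) ev_superset[where h=h, OF h0]) auto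
  finally show ?thesis .
qed

lemma ev_sum:
  assumes "rhom h" shows "ev h \<phi> (sum f S) = (\<Sum>x\<in>S. ev h \<phi> (f x))"
  by (induction S rule: infinite_finite_induct) (auto simp: ev_add[OF assms])

lemma ev_single:
  assumes "rhom h" shows "ev h \<phi> (Poly_Mapping.single \<mu> c) = h c * mon \<phi> \<mu>"
  using assms by (cases "c = 0") (auto simp: ev_def rhom_def)

lemma pm_decomp: "F = (\<Sum>\<mu>\<in>Poly_Mapping.keys F. Poly_Mapping.single \<mu> (Poly_Mapping.lookup F \<mu>))"
proof (rule poly_mapping_eqI)
  fix k
  show "Poly_Mapping.lookup F k = Poly_Mapping.lookup (\<Sum>\<mu>\<in>Poly_Mapping.keys F. Poly_Mapping.single \<mu> (Poly_Mapping.lookup F \<mu>)) k"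
    by (simp add: lookup_sum lookup_single when_def in_keys_iff)
qed

lemma ev_mult:
  assumes "rhom h" shows "ev h \<phi> (A * B) = ev h \<phi> A * ev h \<phi> B"
proof -
  have hm: "\<And>x y. h (x*y) = h x * h y" using assms by (auto simp: rhom_def)
  let ?a = "\<lambda>\<mu>. Poly_Mapping.single \<mu> (Poly_Mapping.lookup A \<mu>)"
  let ?b = "\<lambda>\<mu>. Poly_Mapping.single \<mu> (Poly_Mapping.lookup B \<mu>)"
  have "A * B = (\<Sum>\<mu>\<in>Poly_Mapping.keys A. ?a \<mu>) * (\<Sum>\<nu>\<in>Poly_Mapping.keys B. ?b \<nu>)"
    using pm_decomp[of A] pm_decomp[of B] by simp
  also have "\<dots> = (\<Sum>\<mu>\<in>Poly_Mapping.keys A. \<Sum>\<nu>\<in>Poly_Mapping.keys B. ?a \<mu> * ?b \<nu>)"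
    by (rule sum_product)
  finally have AB: "A * B = \<dots>" .
  have "ev h \<phi> (A*B) = (\<Sum>\<mu>\<in>Poly_Mapping.keys A. \<Sum>\<nu>\<in>Poly_Mapping.keys B. ev h \<phi> (?a \<mu> * ?b \<nu>))"
    by (subst AB) (simp add: ev_sum[OF assms])
  also have "\<dots> = (\<Sum>\<mu>\<in>Poly_Mapping.keys A. \<Sum>\<nu>\<in>Poly_Mapping.keys B.
       (h (Poly_Mapping.lookup A \<mu>) * mon \<phi> \<mu>) * (h (Poly_Mapping.lookup B \<nu>) * mon \<phi> \<nu>))"
    by (simp add: mult_single ev_single[OF assms] hm mon_add ac_simps)
  also have "\<dots> = ev h \<phi> A * ev h \<phi> B"
    by (simp add: ev_def sum_product)
  finally show ?thesis .
qed

lemma ev_one: assumes "rhom h" shows "ev h \<phi> 1 = 1"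
  using ev_single[OF assms, where \<mu>=0 and c=1 and \<phi>=\<phi>] assms by (simp add: rhom_def)

lemma ev_pow: assumes "rhom h" shows "ev h \<phi> (A ^ n) = ev h \<phi> A ^ n"
  by (induction n) (simp_all add: ev_one[OF assms] ev_mult[OF assms])

lemma ev_prod: assumes "rhom h" shows "ev h \<phi> (prod f S) = (\<Prod>x\<in>S. ev h \<phi> (f x))"
  by (induction S rule: infinite_finite_induct) (auto simp: ev_one[OF assms] ev_mult[OF assms])

definition const :: "'a::comm_ring_1 \<Rightarrow> 'a mpoly3" where
  "const c = Poly_Mapping.single 0 c"

definition var :: "3 \<Rightarrow> 'a::comm_ring_1 mpoly3" where
  "var i = Poly_Mapping.single (Poly_Mapping.single i 1) 1"

lemma rhom_const: "rhom const"
  by (simp add: rhom_def const_def single_add mult_single)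

lemma rhom_id: "rhom (\<lambda>x. x)"
  by (simp add: rhom_def)

lemma ev_const: assumes "rhom h" shows "ev h \<phi> (const c) = h c"
  by (simp add: const_def ev_single[OF assms])

lemma mon_single: "mon \<phi> (Poly_Mapping.single i 1) = \<phi> i"
proof -
  have "mon \<phi> (Poly_Mapping.single i 1) = (\<Prod>l\<in>UNIV. if i = l then \<phi> l else 1)"
    unfolding mon_def by (rule prod.cong) (auto simp: lookup_single when_def)
  then show ?thesis by simp
qed

lemma ev_var: assumes "rhom h" shows "ev h \<phi> (var i) = \<phi> i"
  unfolding var_def ev_single[OF assms] mon_single using assms by (simp add: rhom_def)

lemma var_pow: "(var i :: 'a::comm_ring_1 mpoly3) ^ n = Poly_Mapping.single (Poly_Mapping.single i n) 1"
proof (induction n)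
  case 0 then show ?case by simp
next
  case (Suc n) then show ?case
    by (simp add: var_def mult_single single_add[symmetric] add.commute)
qed

lemma mon_var: "mon var \<mu> = (Poly_Mapping.single \<mu> 1 :: 'a::comm_ring_1 mpoly3)"
proof -
  have "(\<Prod>i\<in>S. (var i :: 'a mpoly3) ^ Poly_Mapping.lookup \<mu> i)
      = Poly_Mapping.single (\<Sum>i\<in>S. Poly_Mapping.single i (Poly_Mapping.lookup \<mu> i)) 1" if "finite S" for S
    using that
  proof (induction S rule: finite_induct)
    case empty then show ?case by simp
  next
    case (insert x F) then show ?case by (simp add: var_pow mult_single)
  qed
  moreover have "(\<Sum>i\<in>UNIV. Poly_Mapping.single i (Poly_Mapping.lookup \<mu> i)) = \<mu>"
    by (rule poly_mapping_eqI) (simp add: lookup_sum lookup_single when_def)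
  ultimately show ?thesis by (simp add: mon_def)
qed

lemma ev_const_var: "ev const var F = F"
proof -
  have "ev const var F = (\<Sum>\<mu>\<in>Poly_Mapping.keys F. Poly_Mapping.single \<mu> (Poly_Mapping.lookup F \<mu>))"
    unfolding ev_def by (rule sum.cong) (simp_all add: mon_var const_def mult_single)
  then show ?thesis using pm_decomp[of F] by simp
qed

lemma mpeval_ev: "mpeval F x = ev (\<lambda>c. c) x F"
  by (simp add: mpeval_def ev_def mon_def)




lemma rhom_ev: assumes a: "rhom h" shows "rhom (ev h \<phi>)"
  unfolding rhom_def[of "ev h \<phi>"] using ev_add[OF a] ev_mult[OF a] ev_one[OF a] by simp

lemma rhomD: assumes "rhom T"
  shows "T 0 = 0" "T 1 = 1" "T (x+y) = T x + T y" "T (x*y) = T x * T y"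
  using assms by (auto simp: rhom_def)

lemma rhom_sum: "rhom T \<Longrightarrow> T (sum f S) = (\<Sum>x\<in>S. T (f x))"
  by (induction S rule: infinite_finite_induct) (auto simp: rhomD)

lemma rhom_prod: "rhom T \<Longrightarrow> T (prod f S) = (\<Prod>x\<in>S. T (f x))"
  by (induction S rule: infinite_finite_induct) (auto simp: rhomD)

lemma rhom_pow: "rhom T \<Longrightarrow> T (x ^ n) = T x ^ n"
  by (induction n) (auto simp: rhomD)

lemma rhom_diff: "rhom T \<Longrightarrow> T (x - y) = T x - T y"
proof -
  assume a: "rhom T"
  have "T (x - y) + T y = T x" using rhomD(3)[OF a, of "x-y" y] by simp
  then show ?thesis by (simp add: eq_diff_eq)
qed

lemma rhom_minus: "rhom T \<Longrightarrow> T (- x) = - T x"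
  using rhom_diff[of T 0 x] by (simp add: rhomD)

lemma rhom_decomp:
  "rhom (S :: 'a::comm_ring_1 mpoly3 \<Rightarrow> 'b::comm_ring_1) \<Longrightarrow>
   S F = (\<Sum>\<mu>\<in>Poly_Mapping.keys F. S (Poly_Mapping.single \<mu> (Poly_Mapping.lookup F \<mu>)))"
  by (subst pm_decomp) (simp add: rhom_sum)

lemma rhom_mon: "rhom T \<Longrightarrow> T (mon \<phi> \<mu>) = mon (\<lambda>i. T (\<phi> i)) \<mu>"
  by (simp add: mon_def rhom_prod rhom_pow)

lemma ev_comp:
  assumes T: "rhom T" and h: "rhom h"
  shows "T (ev h \<phi> F) = ev (\<lambda>c. T (h c)) (\<lambda>i. T (\<phi> i)) F"
proof -
  have Th: "rhom (\<lambda>c. T (h c))" using T h by (simp add: rhom_def)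
  have 1: "rhom (\<lambda>F. T (ev h \<phi> F))" using T rhom_ev[OF h] by (simp add: rhom_def)
  show ?thesis
    apply (subst rhom_decomp[OF 1])
    apply (subst rhom_decomp[OF rhom_ev[OF Th]])
    by (simp add: ev_single[OF h] ev_single[OF Th] rhomD[OF T] rhom_mon[OF T])
qed

definition linf :: "(3 \<Rightarrow> 3 \<Rightarrow> 'a::comm_ring_1) \<Rightarrow> 3 \<Rightarrow> 'a mpoly3" where
  "linf A i = (\<Sum>j\<in>UNIV. const (A i j) * var j)"

definition lin :: "(3 \<Rightarrow> 3 \<Rightarrow> 'a::comm_ring_1) \<Rightarrow> 'a mpoly3 \<Rightarrow> 'a mpoly3" where
  "lin A = ev const (linf A)"

lemma rhom_lin: "rhom (lin A)"
  by (simp add: lin_def rhom_ev rhom_const)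

lemma rhom_mpeval: "rhom (\<lambda>F. mpeval F x)"
  by (simp add: mpeval_ev[abs_def] rhom_ev rhom_id)

lemma mpeval_const: "mpeval (const c) x = c"
  by (simp add: mpeval_ev ev_const rhom_id)

lemma mpeval_var: "mpeval (var i) x = x i"
  by (simp add: mpeval_ev ev_var rhom_id)

lemma mpeval_linf: "mpeval (linf A i) x = (\<Sum>j\<in>UNIV. A i j * x j)"
  unfolding linf_def
  by (simp add: rhom_sum[OF rhom_mpeval] rhomD[OF rhom_mpeval] mpeval_const mpeval_var)

lemma mpeval_lin: "mpeval (lin A F) x = mpeval F (\<lambda>i. \<Sum>j\<in>UNIV. A i j * x j)"
proof -
  have "mpeval (lin A F) x = ev (\<lambda>c. mpeval (const c) x) (\<lambda>i. mpeval (linf A i) x) F"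
    unfolding lin_def by (rule ev_comp[OF rhom_mpeval rhom_const])
  also have "\<dots> = ev (\<lambda>c. c) (\<lambda>i. \<Sum>j\<in>UNIV. A i j * x j) F"
    by (simp only: mpeval_const mpeval_linf)
  finally show ?thesis unfolding mpeval_ev[of F] .
qed

lemma lin_const: "lin A (const c) = const c"
  by (simp add: lin_def ev_const rhom_const)

lemma lin_var: "lin A (var i) = linf A i"
  by (simp add: lin_def ev_var rhom_const)

lemma lin_comp:
  assumes MN: "\<And>i l. (\<Sum>j\<in>UNIV. M i j * N j l) = (if i = l then 1 else 0)"
  shows "lin N (lin M F) = F"
proof -
  have "lin N (lin M F) = ev (\<lambda>c. lin N (const c)) (\<lambda>i. lin N (linf M i)) F"
    unfolding lin_def[of M] by (rule ev_comp[OF rhom_lin rhom_const])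
  also have "(\<lambda>i. lin N (linf M i)) = var"
  proof
    fix i
    have "lin N (linf M i) = (\<Sum>j\<in>UNIV. const (M i j) * (\<Sum>l\<in>UNIV. const (N j l) * var l))"
      unfolding linf_def[of M]
      by (simp add: rhom_sum[OF rhom_lin] rhomD[OF rhom_lin] lin_const lin_var linf_def)
    also have "\<dots> = (\<Sum>l\<in>UNIV. \<Sum>j\<in>UNIV. const (M i j * N j l) * var l)"
      apply (subst sum.swap)
      by (simp add: sum_distrib_left mult.assoc[symmetric] const_def mult_single)
    also have "\<dots> = (\<Sum>l\<in>UNIV. const (\<Sum>j\<in>UNIV. M i j * N j l) * var l)"
      by (simp add: sum_distrib_right rhom_sum[OF rhom_const])
    also have "\<dots> = (\<Sum>l\<in>UNIV. if i = l then var l else 0)"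
      by (rule sum.cong) (simp_all add: MN const_def)
    also have "\<dots> = var i" by simp
    finally show "lin N (linf M i) = var i" .
  qed
  finally show ?thesis by (simp add: lin_const ev_const_var)
qed




lemma ideal_pow_SucI:
  "F = (\<Sum>j<(N::nat). f j * g j) \<Longrightarrow> \<forall>j<N. f j \<in> ideal_pow I k \<and> g j \<in> I \<Longrightarrow> F \<in> ideal_pow I (Suc k)"
  apply (simp only: ideal_pow.simps mem_Collect_eq)
  apply (rule exI[of _ N], rule exI[of _ f], rule exI[of _ g])
  by simp

lemma ideal_pow_SucE:
  "F \<in> ideal_pow I (Suc k) \<Longrightarrow> \<exists>(N::nat) f g. F = (\<Sum>j<N. f j * g j) \<and> (\<forall>j<N. f j \<in> ideal_pow I k \<and> g j \<in> I)"
  by auto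

declare ideal_pow.simps(2)[simp del]

lemma ideal_pow_hom:
  assumes T: "rhom T" and TI: "\<forall>x\<in>I. T x \<in> J"
  shows "F \<in> ideal_pow I k \<Longrightarrow> T F \<in> ideal_pow J k"
proof (induction k arbitrary: F)
  case 0 then show ?case by simp
next
  case (Suc k)
  then obtain N :: nat and f g where F: "F = (\<Sum>j<N. f j * g j)" and fg: "\<forall>j<N. f j \<in> ideal_pow I k \<and> g j \<in> I"
    using ideal_pow_SucE by blast
  have "T F = (\<Sum>j<N. T (f j) * T (g j))" by (simp add: F rhom_sum[OF T] rhomD[OF T])
  moreover have "\<forall>j<N. T (f j) \<in> ideal_pow J k \<and> T (g j) \<in> J" using fg Suc.IH TI by blast
  ultimately show ?case by (intro ideal_pow_SucI) auto
qed

lemma ideal_pow_Suc_zero: "0 \<in> ideal_pow I (Suc k)"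
  by (rule ideal_pow_SucI[where N=0]) auto

lemma ideal_pow_Suc_prod: "f \<in> ideal_pow I k \<Longrightarrow> g \<in> I \<Longrightarrow> f * g \<in> ideal_pow I (Suc k)"
  by (rule ideal_pow_SucI[where N=1 and f="\<lambda>_. f" and g="\<lambda>_. g"]) simp_all

lemma sum_split_nat: "(\<Sum>j<N1+(N2::nat). h j) = (\<Sum>j<N1. h j) + (\<Sum>j<N2. (h (N1+j) :: 'b::comm_monoid_add))"
  by (induction N2) (simp_all add: ac_simps)

lemma ideal_pow_Suc_add:
  assumes "A \<in> ideal_pow I (Suc k)" "B \<in> ideal_pow I (Suc k)"
  shows "A + B \<in> ideal_pow I (Suc k)"
proof -
  obtain N1 :: nat and f1 g1 where A: "A = (\<Sum>j<N1. f1 j * g1 j)" and fg1: "\<forall>j<N1. f1 j \<in> ideal_pow I k \<and> g1 j \<in> I"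
    using ideal_pow_SucE[OF assms(1)] by blast
  obtain N2 :: nat and f2 g2 where B: "B = (\<Sum>j<N2. f2 j * g2 j)" and fg2: "\<forall>j<N2. f2 j \<in> ideal_pow I k \<and> g2 j \<in> I"
    using ideal_pow_SucE[OF assms(2)] by blast
  define f where "f j = (if j < N1 then f1 j else f2 (j - N1))" for j
  define g where "g j = (if j < N1 then g1 j else g2 (j - N1))" for j
  have "(\<Sum>j<N1+N2. f j * g j) = (\<Sum>j<N1. f j * g j) + (\<Sum>j<N2. f (N1+j) * g (N1+j))"
    by (rule sum_split_nat)
  also have "\<dots> = A + B" unfolding A B f_def g_def by simp
  finally have "A + B = (\<Sum>j<N1+N2. f j * g j)" by simp
  moreover have "\<forall>j<N1+N2. f j \<in> ideal_pow I k \<and> g j \<in> I"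
    using fg1 fg2 unfolding f_def g_def by auto
  ultimately show ?thesis by (intro ideal_pow_SucI) auto
qed

lemma ideal_pow_Suc_sum:
  "finite S \<Longrightarrow> (\<And>x. x \<in> S \<Longrightarrow> h x \<in> ideal_pow I (Suc k)) \<Longrightarrow> sum h S \<in> ideal_pow I (Suc k)"
  by (induction S rule: finite_induct) (auto intro: ideal_pow_Suc_zero ideal_pow_Suc_add)

definition wt :: "3 \<Rightarrow> (3 \<Rightarrow>\<^sub>0 nat) \<Rightarrow> nat" where
  "wt q \<mu> = (\<Sum>i\<in>UNIV-{q}. Poly_Mapping.lookup \<mu> i)"

definition W :: "3 \<Rightarrow> nat \<Rightarrow> 'a::comm_ring_1 mpoly3 set" where
  "W q w = {F. \<forall>\<mu>\<in>Poly_Mapping.keys F. w \<le> wt q \<mu>}"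

lemma wt_add: "wt q (\<mu> + \<nu>) = wt q \<mu> + wt q \<nu>"
  by (simp add: wt_def lookup_add sum.distrib)

lemma wt_single: "i \<noteq> q \<Longrightarrow> wt q (Poly_Mapping.single i n) = n"
proof -
  assume "i \<noteq> q"
  have "wt q (Poly_Mapping.single i n) = (\<Sum>l\<in>UNIV-{q}. if i = l then n else 0)"
    unfolding wt_def by (rule sum.cong) (auto simp: lookup_single when_def)
  then show ?thesis using \<open>i \<noteq> q\<close> by simp
qed

lemma W_zero: "0 \<in> W q w" by (simp add: W_def)

lemma W_add: "A \<in> W q w \<Longrightarrow> B \<in> W q w \<Longrightarrow> A + B \<in> W q w"
  using keys_add[of A B] by (auto simp: W_def)

lemma W_sum: "(\<And>x. x \<in> S \<Longrightarrow> h x \<in> W q w) \<Longrightarrow> sum h S \<in> W q w"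
  by (induction S rule: infinite_finite_induct) (auto simp: W_zero W_add)

lemma W_mult: "A \<in> W q a \<Longrightarrow> B \<in> W q b \<Longrightarrow> A * B \<in> W q (a + b)"
proof -
  assume A: "A \<in> W q a" and B: "B \<in> W q b"
  show ?thesis unfolding W_def mem_Collect_eq
  proof
    fix \<mu> assume "\<mu> \<in> Poly_Mapping.keys (A*B)"
    then obtain x y where "\<mu> = x + y" "x \<in> Poly_Mapping.keys A" "y \<in> Poly_Mapping.keys B"
      using keys_mult[of A B] by blast
    then show "a + b \<le> wt q \<mu>" using A B by (auto simp: W_def wt_add intro: add_mono)
  qed
qed

lemma W_mono: "w \<le> v \<Longrightarrow> F \<in> W q v \<Longrightarrow> F \<in> W q w"
  by (auto simp: W_def)

lemma W_pow1: "F \<in> ideal_pow (W q 1) k \<Longrightarrow> F \<in> W q k"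
proof (induction k arbitrary: F)
  case 0 then show ?case by (simp add: W_def)
next
  case (Suc k)
  then obtain N :: nat and f g where F: "F = (\<Sum>j<N. f j * g j)" and fg: "\<forall>j<N. f j \<in> ideal_pow (W q 1) k \<and> g j \<in> W q 1"
    using ideal_pow_SucE by blast
  have "f j * g j \<in> W q (Suc k)" if "j < N" for j
    using W_mult[of "f j" q k "g j" 1] Suc.IH fg that by simp
  then show ?case unfolding F by (intro W_sum) auto
qed

lemma W_pow2: fixes F :: "'a::comm_ring_1 mpoly3" shows "F \<in> W q k \<Longrightarrow> F \<in> ideal_pow (W q 1) k"
proof (induction k arbitrary: F)
  case 0 then show ?case by simp
next
  case (Suc k)
  have mono: "Poly_Mapping.single \<mu> c \<in> ideal_pow (W q 1) (Suc k)" if mu: "Suc k \<le> wt q \<mu>" for \<mu> and c :: 'a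
  proof -
    have "\<exists>i\<in>UNIV-{q}. Poly_Mapping.lookup \<mu> i \<noteq> 0"
    proof (rule ccontr)
      assume "\<not> ?thesis"
      then have "wt q \<mu> = 0" unfolding wt_def by simp
      with mu show False by simp
    qed
    then obtain i where i: "i \<noteq> q" "Poly_Mapping.lookup \<mu> i \<noteq> 0" by auto
    define \<nu> where "\<nu> = \<mu> - Poly_Mapping.single i 1"
    have mu_eq: "\<mu> = \<nu> + Poly_Mapping.single i 1"
      by (rule poly_mapping_eqI) (use i in \<open>auto simp: \<nu>_def lookup_add lookup_minus lookup_single when_def\<close>)
    have "wt q \<mu> = wt q \<nu> + 1" using wt_add[of q \<nu> "Poly_Mapping.single i 1"] wt_single[OF i(1)] mu_eq by simp
    then have "k \<le> wt q \<nu>" using mu by simp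
    then have "Poly_Mapping.single \<nu> c \<in> W q k" by (simp add: W_def)
    then have 1: "Poly_Mapping.single \<nu> c \<in> ideal_pow (W q 1) k" by (rule Suc.IH)
    have 2: "Poly_Mapping.single (Poly_Mapping.single i 1) 1 \<in> W q (1::nat)"
      using wt_single[OF i(1)] by (simp add: W_def)
    have "Poly_Mapping.single \<mu> c = Poly_Mapping.single \<nu> c * Poly_Mapping.single (Poly_Mapping.single i 1) 1"
      by (simp add: mult_single mu_eq)
    then show ?thesis using ideal_pow_Suc_prod[OF 1 2] by simp
  qed
  show ?case
    apply (subst pm_decomp)
    apply (rule ideal_pow_Suc_sum)
    using Suc.prems mono by (auto simp: W_def)
qed

lemma W_pow: "ideal_pow (W q 1) k = W q k"
  using W_pow1 W_pow2 by blast

definition vmin :: "3 \<Rightarrow> 'a::comm_ring_1 mpoly3 \<Rightarrow> nat" where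
  "vmin q F = Min (wt q ` Poly_Mapping.keys F)"

lemma keys_nonempty: "F \<noteq> 0 \<Longrightarrow> Poly_Mapping.keys F \<noteq> {}"
  by simp

lemma W_iff: "F \<noteq> 0 \<Longrightarrow> F \<in> W q w \<longleftrightarrow> w \<le> vmin q F"
  unfolding W_def vmin_def using keys_nonempty[of F] by (auto simp: Min_ge_iff)

lemma vmin_in: assumes "F \<noteq> 0" shows "\<exists>\<mu>\<in>Poly_Mapping.keys F. wt q \<mu> = vmin q F"
proof -
  have "Min (wt q ` Poly_Mapping.keys F) \<in> wt q ` Poly_Mapping.keys F"
    by (rule Min_in) (use keys_nonempty[OF assms] in auto)
  then show ?thesis unfolding vmin_def by (metis imageE)
qed

lemma vmin_le: "\<mu> \<in> Poly_Mapping.keys F \<Longrightarrow> vmin q F \<le> wt q \<mu>"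
  unfolding vmin_def by simp

lemma low_part:
  fixes A :: "'a::field mpoly3"
  assumes "A \<noteq> 0"
  obtains Al Ah where "A = Al + Ah" "Al \<noteq> 0" "\<forall>\<mu>\<in>Poly_Mapping.keys Al. wt q \<mu> = vmin q A"
    "Ah \<in> W q (Suc (vmin q A))"
proof -
  let ?a = "vmin q A"
  let ?S = "{\<mu>\<in>Poly_Mapping.keys A. wt q \<mu> = ?a}"
  define Al where "Al = (\<Sum>\<mu>\<in>?S. Poly_Mapping.single \<mu> (Poly_Mapping.lookup A \<mu>))"
  have lAl: "Poly_Mapping.lookup Al \<mu> = (if \<mu> \<in> ?S then Poly_Mapping.lookup A \<mu> else 0)" for \<mu>
    unfolding Al_def by (simp add: lookup_sum lookup_single when_def)
  have 1: "A = Al + (A - Al)" by simp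
  obtain \<mu>0 where m0: "\<mu>0 \<in> Poly_Mapping.keys A" "wt q \<mu>0 = ?a" using vmin_in[OF assms] by blast
  have 2: "Al \<noteq> 0"
  proof
    assume "Al = 0"
    then have "Poly_Mapping.lookup Al \<mu>0 = 0" by simp
    with lAl[of \<mu>0] m0 show False by (simp add: in_keys_iff)
  qed
  have 3: "\<forall>\<mu>\<in>Poly_Mapping.keys Al. wt q \<mu> = ?a"
    using lAl by (auto simp: in_keys_iff split: if_splits)
  have 4: "A - Al \<in> W q (Suc ?a)"
    unfolding W_def mem_Collect_eq
  proof
    fix \<mu> assume "\<mu> \<in> Poly_Mapping.keys (A - Al)"
    then have "Poly_Mapping.lookup A \<mu> - Poly_Mapping.lookup Al \<mu> \<noteq> 0" by (simp add: in_keys_iff lookup_minus)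
    then have "\<mu> \<in> Poly_Mapping.keys A" "wt q \<mu> \<noteq> ?a" using lAl[of \<mu>] by (auto simp: in_keys_iff split: if_splits)
    moreover have "?a \<le> wt q \<mu>" using vmin_le calculation(1) by blast
    ultimately show "Suc ?a \<le> wt q \<mu>" by simp
  qed
  show ?thesis using that[OF 1 2 3 4] .
qed

lemma vmin_mult:
  fixes A B :: "'a::field mpoly3"
  assumes A: "A \<noteq> 0" and B: "B \<noteq> 0"
  shows "vmin q (A * B) = vmin q A + vmin q B"
proof (rule antisym)
  let ?a = "vmin q A" and ?b = "vmin q B"
  have AB: "A * B \<noteq> 0" using A B by simp
  have "A \<in> W q ?a" "B \<in> W q ?b" using W_iff A B by auto
  then have "A * B \<in> W q (?a + ?b)" by (rule W_mult)
  then show "?a + ?b \<le> vmin q (A*B)" using W_iff[OF AB] by blast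
  obtain Al Ah where a1: "A = Al + Ah" "Al \<noteq> 0" "\<forall>\<mu>\<in>Poly_Mapping.keys Al. wt q \<mu> = ?a" "Ah \<in> W q (Suc ?a)"
    using low_part[OF A] by blast
  obtain Bl Bh where b1: "B = Bl + Bh" "Bl \<noteq> 0" "\<forall>\<mu>\<in>Poly_Mapping.keys Bl. wt q \<mu> = ?b" "Bh \<in> W q (Suc ?b)"
    using low_part[OF B] by blast
  have AlW: "Al \<in> W q ?a" using a1(3) by (simp add: W_def)
  have BW: "B \<in> W q ?b" using W_iff B by auto
  have r1: "Al * Bh \<in> W q (Suc (?a + ?b))" using W_mult[OF AlW b1(4)] by simp
  have r2: "Ah * B \<in> W q (Suc (?a + ?b))" using W_mult[OF a1(4) BW] by simp
  have rest: "Al * Bh + Ah * B \<in> W q (Suc (?a + ?b))" using W_add[OF r1 r2] .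
  have eq: "A * B = Al * Bl + (Al * Bh + Ah * B)" using a1(1) b1(1) by (simp add: algebra_simps)
  have "Al * Bl \<noteq> 0" using a1(2) b1(2) by simp
  then obtain \<mu> where mu: "\<mu> \<in> Poly_Mapping.keys (Al * Bl)" using keys_nonempty by blast
  then obtain x y where "\<mu> = x + y" "x \<in> Poly_Mapping.keys Al" "y \<in> Poly_Mapping.keys Bl"
    using keys_mult[of Al Bl] by blast
  then have wmu: "wt q \<mu> = ?a + ?b" using a1(3) b1(3) by (simp add: wt_add)
  have "\<mu> \<notin> Poly_Mapping.keys (Al * Bh + Ah * B)" using rest wmu by (auto simp: W_def)
  then have "Poly_Mapping.lookup (A * B) \<mu> = Poly_Mapping.lookup (Al * Bl) \<mu>"
    by (simp add: eq lookup_add in_keys_iff)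
  then have "\<mu> \<in> Poly_Mapping.keys (A * B)" using mu by (simp add: in_keys_iff)
  then show "vmin q (A*B) \<le> ?a + ?b" using vmin_le wmu by metis
qed




definition ee :: "3 \<Rightarrow> 3 \<Rightarrow> 'a::comm_ring_1" where
  "ee q = (\<lambda>i. if i = q then 1 else 0)"

lemma wt0: "wt q \<mu> = 0 \<Longrightarrow> i \<noteq> q \<Longrightarrow> Poly_Mapping.lookup \<mu> i = 0"
  unfolding wt_def by (simp add: sum_eq_0_iff)

lemma mon_ee:
  "mon (\<lambda>i. t * ee q i) \<mu> = (if wt q \<mu> = 0 then t ^ Poly_Mapping.lookup \<mu> q else (0::'a::field))"
proof (cases "wt q \<mu> = 0")
  case True
  have "mon (\<lambda>i. t * ee q i) \<mu> = (\<Prod>i\<in>UNIV. if i = q then t ^ Poly_Mapping.lookup \<mu> q else 1)"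
    unfolding mon_def by (rule prod.cong) (auto simp: ee_def wt0[OF True])
  then show ?thesis using True by simp
next
  case False
  then obtain i where i: "i \<noteq> q" "Poly_Mapping.lookup \<mu> i \<noteq> 0"
    unfolding wt_def by (auto simp: sum_eq_0_iff)
  have "(t * ee q i) ^ Poly_Mapping.lookup \<mu> i = (0::'a)" using i by (simp add: ee_def)
  then have "mon (\<lambda>i. t * ee q i) \<mu> = 0" unfolding mon_def by (meson UNIV_I finite prod_zero)
  then show ?thesis using False by simp
qed

lemma mpeval_ee:
  "mpeval (F :: 'a::field mpoly3) (\<lambda>i. t * ee q i) =
    (\<Sum>\<mu>\<in>{\<mu>\<in>Poly_Mapping.keys F. wt q \<mu> = 0}. Poly_Mapping.lookup F \<mu> * t ^ Poly_Mapping.lookup \<mu> q)"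
proof -
  have "mpeval F (\<lambda>i. t * ee q i) = (\<Sum>\<mu>\<in>Poly_Mapping.keys F. Poly_Mapping.lookup F \<mu> *
        (if wt q \<mu> = 0 then t ^ Poly_Mapping.lookup \<mu> q else 0))"
    by (simp add: mpeval_ev ev_def mon_ee)
  also have "\<dots> = (\<Sum>\<mu>\<in>Poly_Mapping.keys F. if wt q \<mu> = 0 then Poly_Mapping.lookup F \<mu> * t ^ Poly_Mapping.lookup \<mu> q else 0)"
    by (rule sum.cong) auto
  also have "\<dots> = (\<Sum>\<mu>\<in>{\<mu>\<in>Poly_Mapping.keys F. wt q \<mu> = 0}. Poly_Mapping.lookup F \<mu> * t ^ Poly_Mapping.lookup \<mu> q)"
    by (simp add: sum.inter_filter)
  finally show ?thesis .
qed

lemma pt_ee: "pt_ideal (ee q) = (W q 1 :: 'a::field_char_0 mpoly3 set)"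
proof (intro set_eqI iffI)
  fix F :: "'a mpoly3"
  assume "F \<in> W q 1"
  then have E: "{\<mu>\<in>Poly_Mapping.keys F. wt q \<mu> = 0} = {}" by (auto simp: W_def)
  show "F \<in> pt_ideal (ee q)" unfolding pt_ideal_def mem_Collect_eq mpeval_ee E by simp
next
  fix F :: "'a mpoly3"
  assume F: "F \<in> pt_ideal (ee q)"
  let ?S = "{\<mu>\<in>Poly_Mapping.keys F. wt q \<mu> = 0}"
  show "F \<in> W q 1"
  proof (rule ccontr)
    assume "F \<notin> W q 1"
    then obtain \<mu>0 where m0: "\<mu>0 \<in> Poly_Mapping.keys F" "wt q \<mu>0 = 0" by (auto simp: W_def)
    define p where "p = (\<Sum>\<mu>\<in>?S. monom (Poly_Mapping.lookup F \<mu>) (Poly_Mapping.lookup \<mu> q))"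
    have "poly p t = 0" for t
    proof -
      have "poly p t = mpeval F (\<lambda>i. t * ee q i)"
        by (simp add: p_def poly_sum poly_monom mpeval_ee)
      then show ?thesis using F by (simp add: pt_ideal_def)
    qed
    then have "p = 0" using poly_all_0_iff_0 by blast
    then have "coeff p (Poly_Mapping.lookup \<mu>0 q) = 0" by simp
    moreover have "coeff p (Poly_Mapping.lookup \<mu>0 q) =
        (\<Sum>\<mu>\<in>?S. if \<mu> = \<mu>0 then Poly_Mapping.lookup F \<mu> else 0)"
      unfolding p_def coeff_sum coeff_monom
    proof (rule sum.cong)
      fix \<mu> assume "\<mu> \<in> ?S"
      then have w: "wt q \<mu> = 0" by simp
      have "Poly_Mapping.lookup \<mu> q = Poly_Mapping.lookup \<mu>0 q \<longleftrightarrow> \<mu> = \<mu>0"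
      proof
        assume h: "Poly_Mapping.lookup \<mu> q = Poly_Mapping.lookup \<mu>0 q"
        show "\<mu> = \<mu>0"
        proof (rule poly_mapping_eqI)
          fix i show "Poly_Mapping.lookup \<mu> i = Poly_Mapping.lookup \<mu>0 i"
            using h wt0[OF w, of i] wt0[OF m0(2), of i] by (cases "i = q") auto
        qed
      qed simp
      then show "(if Poly_Mapping.lookup \<mu> q = Poly_Mapping.lookup \<mu>0 q then Poly_Mapping.lookup F \<mu> else 0) =
          (if \<mu> = \<mu>0 then Poly_Mapping.lookup F \<mu> else 0)" by simp
    qed simp
    moreover have "\<dots> = Poly_Mapping.lookup F \<mu>0" using m0 by simp
    ultimately show False using m0(1) by (simp add: in_keys_iff)
  qed
qed

definition MM :: "(3 \<Rightarrow> 'a::field) \<Rightarrow> 3 \<Rightarrow> 3 \<Rightarrow> 3 \<Rightarrow> 'a" where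
  "MM P q i j = (if i = j then 1 else 0) + (if j = q then P i - (if i = q then 1 else 0) else 0)"

definition NN :: "(3 \<Rightarrow> 'a::field) \<Rightarrow> 3 \<Rightarrow> 3 \<Rightarrow> 3 \<Rightarrow> 'a" where
  "NN P q j l = (if j = l then 1 else 0) - (if l = q then (P j - (if j = q then 1 else 0)) / P q else 0)"


lemma MN: assumes "P q \<noteq> 0"
  shows "(\<Sum>j\<in>UNIV. MM P q i j * NN P q j l) = (if i = l then 1 else 0)"
proof -
  have "(\<Sum>j\<in>UNIV. MM P q i j * NN P q j l) =
     (\<Sum>j\<in>UNIV. (if i = j then NN P q j l else 0)) +
     (\<Sum>j\<in>UNIV. (if j = q then (P i - (if i = q then 1 else 0)) * NN P q j l else 0))"
    by (rule trans[OF sum.cong sum.distrib]) (auto simp: MM_def algebra_simps)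
  also have "\<dots> = NN P q i l + (P i - (if i = q then 1 else 0)) * NN P q q l"
    by (auto simp: algebra_simps)
  also have "\<dots> = (if i = l then 1 else 0)"
    using assms by (auto simp: NN_def field_simps)
  finally show ?thesis .
qed

lemma M_ee: "(\<Sum>j\<in>UNIV. MM P q i j * (t * ee q j)) = t * P i"
proof -
  have "MM P q i j * (t * ee q j) = (if j = q then t * P i else 0)" for j
    by (auto simp: MM_def ee_def)
  then show ?thesis by simp
qed

lemma N_P: assumes "P q \<noteq> 0" shows "(\<Sum>j\<in>UNIV. NN P q i j * (t * P j)) = t * ee q i"
proof -
  have "(\<Sum>j\<in>UNIV. NN P q i j * (t * P j)) =
     (\<Sum>j\<in>UNIV. (if i = j then t * P j else 0)) -
     (\<Sum>j\<in>UNIV. (if j = q then (P i - (if i = q then 1 else 0)) / P q * (t * P j) else 0))"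
    by (rule trans[OF sum.cong sum_subtractf]) (auto simp: NN_def algebra_simps)
  also have "\<dots> = t * P i - (P i - (if i = q then 1 else 0)) / P q * (t * P q)"
    by simp
  also have "\<dots> = t * ee q i"
    using assms by (auto simp: ee_def field_simps)
  finally show ?thesis .
qed

context
  fixes P :: "3 \<Rightarrow> 'a::field_char_0" and q :: 3
  assumes Pq: "P q \<noteq> 0"
begin

lemma linM_pt: "F \<in> pt_ideal P \<Longrightarrow> lin (MM P q) F \<in> pt_ideal (ee q)"
  by (simp add: pt_ideal_def mpeval_lin M_ee)

lemma linN_pt: "F \<in> pt_ideal (ee q) \<Longrightarrow> lin (NN P q) F \<in> pt_ideal P"
  by (simp add: pt_ideal_def mpeval_lin N_P[where P=P and q=q, OF Pq])

lemma linNM: "lin (NN P q) (lin (MM P q) F) = F"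
  by (rule lin_comp) (rule MN[where P=P and q=q, OF Pq])

lemma pow_iff: "F \<in> ideal_pow (pt_ideal P) k \<longleftrightarrow> lin (MM P q) F \<in> W q k"
proof
  assume "F \<in> ideal_pow (pt_ideal P) k"
  moreover have TI: "\<forall>x\<in>pt_ideal P. lin (MM P q) x \<in> pt_ideal (ee q)" using linM_pt by blast
  ultimately have "lin (MM P q) F \<in> ideal_pow (pt_ideal (ee q)) k"
    using ideal_pow_hom[OF rhom_lin TI] by blast
  then show "lin (MM P q) F \<in> W q k" by (metis pt_ee W_pow)
next
  assume "lin (MM P q) F \<in> W q k"
  then have "lin (MM P q) F \<in> ideal_pow (pt_ideal (ee q)) k" by (metis pt_ee W_pow)
  moreover have TI: "\<forall>x\<in>pt_ideal (ee q). lin (NN P q) x \<in> pt_ideal P" using linN_pt by blast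
  ultimately have "lin (NN P q) (lin (MM P q) F) \<in> ideal_pow (pt_ideal P) k"
    using ideal_pow_hom[OF rhom_lin TI] by blast
  then show "F \<in> ideal_pow (pt_ideal P) k" by (simp add: linNM)
qed

lemma linM_nz: "F \<noteq> 0 \<Longrightarrow> lin (MM P q) F \<noteq> 0"
  using linNM[of F] rhomD(1)[OF rhom_lin] by metis

lemma ord_vmin: assumes "F \<noteq> 0" shows "ord_pt P F = vmin q (lin (MM P q) F)"
  unfolding ord_pt_def
proof (rule Greatest_equality)
  show "F \<in> ideal_pow (pt_ideal P) (vmin q (lin (MM P q) F))"
    using pow_iff W_iff[OF linM_nz[OF assms]] by blast
  fix y assume "F \<in> ideal_pow (pt_ideal P) y"
  then show "y \<le> vmin q (lin (MM P q) F)"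
    using pow_iff W_iff[OF linM_nz[OF assms]] by blast
qed

end

lemma ord_mem:
  fixes P :: "3 \<Rightarrow> 'a::field_char_0"
  assumes "\<exists>u. P u \<noteq> 0" "F \<noteq> 0"
  shows "F \<in> ideal_pow (pt_ideal P) k \<longleftrightarrow> k \<le> ord_pt P F"
proof -
  obtain q where q: "P q \<noteq> 0" using assms(1) by blast
  note pi = pow_iff[where P=P and q=q, OF q] and ov = ord_vmin[where P=P and q=q, OF q assms(2)]
    and nz = linM_nz[where P=P and q=q, OF q assms(2)]
  show ?thesis using pi ov W_iff[OF nz] by simp
qed

lemma ord_mult:
  fixes P :: "3 \<Rightarrow> 'a::field_char_0"
  assumes "\<exists>u. P u \<noteq> 0" "A \<noteq> 0" "B \<noteq> 0"
  shows "ord_pt P (A * B) = ord_pt P A + ord_pt P B"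
proof -
  obtain q where q: "P q \<noteq> 0" using assms(1) by blast
  have "A * B \<noteq> 0" using assms by simp
  then show ?thesis
    using ord_vmin[where P=P and q=q, OF q] assms
      vmin_mult[OF linM_nz[where P=P and q=q, OF q assms(2)] linM_nz[where P=P and q=q, OF q assms(3)]]
    by (simp add: rhomD(4)[OF rhom_lin])
qed




lemma mdeg_add: "mdeg (\<mu> + \<nu>) = mdeg \<mu> + mdeg \<nu>"
  by (simp add: mdeg_def lookup_add sum.distrib)

lemma homog_mult: "homog a A \<Longrightarrow> homog b B \<Longrightarrow> homog (a + b) (A * B)"
  unfolding homog_def
proof
  fix \<mu> assume A: "\<forall>\<mu>\<in>Poly_Mapping.keys A. mdeg \<mu> = a" and B: "\<forall>\<mu>\<in>Poly_Mapping.keys B. mdeg \<mu> = b"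
    and "\<mu> \<in> Poly_Mapping.keys (A * B)"
  then obtain x y where "\<mu> = x + y" "x \<in> Poly_Mapping.keys A" "y \<in> Poly_Mapping.keys B"
    using keys_mult[of A B] by blast
  then show "mdeg \<mu> = a + b" using A B by (simp add: mdeg_add)
qed

lemma homog_one: "homog 0 (1 :: 'a::comm_ring_1 mpoly3)"
  by (simp add: homog_def mdeg_def)

lemma homog_const: "homog 0 (Poly_Mapping.single 0 (c::'a::comm_ring_1))"
  by (simp add: homog_def mdeg_def)

lemma homog_pow: "homog d (A :: 'a::comm_ring_1 mpoly3) \<Longrightarrow> homog (n * d) (A ^ n)"
  by (induction n) (simp_all add: homog_one homog_mult)

lemma homog_prod:
  "(\<And>k. k \<in> S \<Longrightarrow> homog (d k) (f k :: 'a::comm_ring_1 mpoly3)) \<Longrightarrow> homog (\<Sum>k\<in>S. d k) (\<Prod>k\<in>S. f k)"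
  by (induction S rule: infinite_finite_induct) (simp_all add: homog_one homog_mult)

lemma homog_unique: "F \<noteq> 0 \<Longrightarrow> homog a F \<Longrightarrow> homog b F \<Longrightarrow> a = b"
  unfolding homog_def using keys_nonempty[of F] by (metis all_not_in_conv)

lemma alpha_le: assumes "F \<in> J" "F \<noteq> 0" "homog d F" shows "alpha J \<le> d"
  unfolding alpha_def by (rule Least_le[where P="\<lambda>d. \<exists>F\<in>J. F \<noteq> 0 \<and> homog d F"]) (use assms in blast)

lemma alpha_ex: assumes "F \<in> J" "F \<noteq> 0" "homog d F" shows "\<exists>D\<in>J. D \<noteq> 0 \<and> homog (alpha J) D"
proof -
  have "\<exists>F\<in>J. F \<noteq> 0 \<and> homog d F" using assms by blast
  then show ?thesis unfolding alpha_def by (rule LeastI[where P="\<lambda>d. \<exists>F\<in>J. F \<noteq> 0 \<and> homog d F"])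
qed

lemma fat_mem:
  fixes P :: "nat \<Rightarrow> 3 \<Rightarrow> 'a::field_char_0"
  assumes "\<forall>i<r. \<exists>u. P i u \<noteq> 0" "F \<noteq> 0"
  shows "F \<in> fat_ideal r P mu \<longleftrightarrow> (\<forall>i<r. mu i \<le> ord_pt (P i) F)"
proof -
  have "\<forall>i<r. F \<in> ideal_pow (pt_ideal (P i)) (mu i) \<longleftrightarrow> mu i \<le> ord_pt (P i) F"
  proof (intro allI impI)
    fix i assume "i < r"
    then show "F \<in> ideal_pow (pt_ideal (P i)) (mu i) \<longleftrightarrow> mu i \<le> ord_pt (P i) F"
      using ord_mem[of "P i" F "mu i"] assms by blast
  qed
  then show ?thesis by (auto simp: fat_ideal_def)
qed




theorem corollary2p2:
  fixes P :: "nat \<Rightarrow> 3 \<Rightarrow> 'a::field_char_0"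
    and r m n s :: nat
    and F :: "'a mpoly3"
    and G :: "nat \<Rightarrow> 'a mpoly3"
    and a :: "nat \<Rightarrow> nat"
    and c :: 'a
  assumes alg_closed: "\<forall>p :: 'a poly. degree p > 0 \<longrightarrow> (\<exists>x. poly p x = 0)"
    and pts_nonzero: "\<forall>i<r. \<exists>u. P i u \<noteq> 0"
    and pts_distinct: "\<forall>i<r. \<forall>k<r. i \<noteq> k \<longrightarrow> \<not> (\<exists>t. P i = (\<lambda>u. t * P k u))"
    and n_pos: "0 < n" and mn: "n < m"
    and F_nonzero: "F \<noteq> 0"
    and F_deg: "homog (alpha (fat_ideal r P (\<lambda>_. m))) F"
    and F_ord: "\<forall>i<r. m \<le> ord_pt (P i) F"
    and F_decomp: "c \<noteq> 0" "F = Poly_Mapping.single 0 c * (\<Prod>j<s. G j ^ a j)"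
    and G_irred: "\<forall>j<s. irreducible (G j)"
    and G_homog: "\<forall>j<s. homog (tdeg (G j)) (G j)"
    and G_distinct: "\<forall>j<s. \<forall>k<s. j \<noteq> k \<longrightarrow> \<not> (G j dvd G k \<and> G k dvd G j)"
    and a_pos: "\<forall>j<s. 1 \<le> a j"
  shows "\<forall>j<s.
     tdeg (G j) = alpha (fat_ideal r P (\<lambda>i. ord_pt (P i) (G j))) \<and>
     int (alpha (fat_ideal r P (\<lambda>i. ord_pt (P i) (G j))))
       - int (alpha (fat_ideal r P (\<lambda>i. ord_pt (P i) (G j) - (m - n))))
     \<le> int (alpha (fat_ideal r P (\<lambda>_. m))) - int (alpha (fat_ideal r P (\<lambda>_. n)))"
proof (intro allI impI)
  fix j assume j: "j < s"
  define Gj where "Gj = G j"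
  define e where "e = a j"
  define R where "R = Poly_Mapping.single 0 c * Gj ^ (e - 1) * (\<Prod>k\<in>{..<s}-{j}. G k ^ a k)"
  define \<gamma> where "\<gamma> = tdeg Gj"
  define \<rho> where "\<rho> = 0 + (e - 1) * \<gamma> + (\<Sum>k\<in>{..<s}-{j}. a k * tdeg (G k))"
  have e1: "1 \<le> e" using a_pos j by (simp add: e_def)
  have Gnz: "Gj \<noteq> 0" using G_irred j by (auto simp: Gj_def)
  have Gh: "homog \<gamma> Gj" using G_homog j by (simp add: Gj_def \<gamma>_def)
  have FGR: "F = Gj * R"
  proof -
    have "(\<Prod>k<s. G k ^ a k) = G j ^ a j * (\<Prod>k\<in>{..<s}-{j}. G k ^ a k)"
      using j by (simp add: prod.remove)
    moreover have "G j ^ a j = Gj * Gj ^ (e - 1)"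
      using e1 by (simp add: Gj_def e_def power_eq_if)
    ultimately show ?thesis using F_decomp(2) by (simp add: R_def ac_simps)
  qed
  have Rnz: "R \<noteq> 0" using F_nonzero FGR by auto
  have Rh: "homog \<rho> R"
    unfolding R_def \<rho>_def
    by (intro homog_mult homog_const homog_pow Gh homog_prod) (use G_homog in auto)
  define am where "am = alpha (fat_ideal r P (\<lambda>_. m))"
  have am: "am = \<gamma> + \<rho>"
    using homog_unique[OF F_nonzero] F_deg homog_mult[OF Gh Rh] FGR by (simp add: am_def)
  have ordF: "ord_pt (P i) F = ord_pt (P i) Gj + ord_pt (P i) R" if "i < r" for i
    using ord_mult[OF _ Gnz Rnz] pts_nonzero that FGR by simp
  have ordDR: "ord_pt (P i) (D * R) = ord_pt (P i) D + ord_pt (P i) R" if "i < r" "D \<noteq> 0" for i D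
    using ord_mult[OF _ that(2) Rnz] pts_nonzero that by simp
  define mj where "mj = (\<lambda>i. ord_pt (P i) Gj)"
  define amj where "amj = alpha (fat_ideal r P mj)"
  have Gmj: "Gj \<in> fat_ideal r P mj" using fat_mem[OF pts_nonzero Gnz] by (simp add: mj_def)
  have le1: "amj \<le> \<gamma>" using alpha_le[OF Gmj Gnz Gh] by (simp add: amj_def)
  obtain D where D: "D \<in> fat_ideal r P mj" "D \<noteq> 0" "homog amj D"
    using alpha_ex[OF Gmj Gnz Gh] by (auto simp: amj_def)
  have DR: "D * R \<in> fat_ideal r P (\<lambda>_. m)"
  proof -
    have "D * R \<noteq> 0" using D(2) Rnz by simp
    moreover have "\<forall>i<r. m \<le> ord_pt (P i) (D * R)"
    proof (intro allI impI)
      fix i assume i: "i < r"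
      have "mj i \<le> ord_pt (P i) D" using D(1) fat_mem[OF pts_nonzero D(2)] i by blast
      then show "m \<le> ord_pt (P i) (D * R)"
        using ordDR[OF i D(2)] ordF[OF i] F_ord[rule_format, OF i] by (simp add: mj_def)
    qed
    ultimately show ?thesis using fat_mem[OF pts_nonzero] by blast
  qed
  have "am \<le> amj + \<rho>"
    using alpha_le[OF DR _ homog_mult[OF D(3) Rh]] D(2) Rnz by (simp add: am_def)
  then have eq1: "amj = \<gamma>" using le1 am by simp
  define nj where "nj = (\<lambda>i. ord_pt (P i) Gj - (m - n))"
  define anj where "anj = alpha (fat_ideal r P nj)"
  define an where "an = alpha (fat_ideal r P (\<lambda>_. n))"
  have Gnj: "Gj \<in> fat_ideal r P nj" using fat_mem[OF pts_nonzero Gnz] by (simp add: nj_def)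
  obtain E where E: "E \<in> fat_ideal r P nj" "E \<noteq> 0" "homog anj E"
    using alpha_ex[OF Gnj Gnz Gh] by (auto simp: anj_def)
  have ER: "E * R \<in> fat_ideal r P (\<lambda>_. n)"
  proof -
    have "E * R \<noteq> 0" using E(2) Rnz by simp
    moreover have "\<forall>i<r. n \<le> ord_pt (P i) (E * R)"
    proof (intro allI impI)
      fix i assume i: "i < r"
      have "nj i \<le> ord_pt (P i) E" using E(1) fat_mem[OF pts_nonzero E(2)] i by blast
      moreover have "m \<le> ord_pt (P i) Gj + ord_pt (P i) R" using ordF[OF i] F_ord[rule_format, OF i] by simp
      ultimately show "n \<le> ord_pt (P i) (E * R)"
        using ordDR[OF i E(2)] mn by (simp add: nj_def)
    qed
    ultimately show ?thesis using fat_mem[OF pts_nonzero] by blast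
  qed
  have "an \<le> anj + \<rho>"
    using alpha_le[OF ER _ homog_mult[OF E(3) Rh]] E(2) Rnz by (simp add: an_def)
  then show "tdeg (G j) = alpha (fat_ideal r P (\<lambda>i. ord_pt (P i) (G j))) \<and>
     int (alpha (fat_ideal r P (\<lambda>i. ord_pt (P i) (G j))))
       - int (alpha (fat_ideal r P (\<lambda>i. ord_pt (P i) (G j) - (m - n))))
     \<le> int (alpha (fat_ideal r P (\<lambda>_. m))) - int (alpha (fat_ideal r P (\<lambda>_. n)))"
    using eq1 am
    by (simp add: amj_def mj_def Gj_def \<gamma>_def anj_def nj_def am_def an_def[symmetric])
qed


end
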